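(* Let $n\ge1$, $\alpha\in(0,n)$, and let $\phi(x)=\Phi(|x|)$ be a radial function on $\mathbb{R}^n$, where $\Phi:[0,\infty)\to[0,\infty)$ is decreasing, such that $\sup_{r>0}\phi^{\alpha}_r(e_1)<\infty$, $e_1=(1,0,\dots,0)$. Then for every finite positive measure $V$ on $\mathbb{R}^n$ absolutely continuous with respect to Lebesgue measure and every fixed $\rho>0$, $$\lim_{t\to0^+}\Big\|\mathcal{M}^{\alpha}_{\phi}(V_t)(\cdot)-\sup_{r>0}\phi^{\alpha}_r(\cdot)\,V(\mathbb{R}^n)\Big\|_{L^{\frac{n}{n-\alpha},\infty}(\mathbb{R}^n\setminus B(0,\rho))}=0.$$
   Context: $\phi^{\alpha}_r(x)=r^{-(n-\alpha)}\phi(x/r)$ and $\mathcal{M}^{\alpha}_{\phi}(\mu)(x)=\sup_{r>0}\frac{1}{r^{n-\alpha}}\int_{\mathbb{R}^n}\phi\big(\frac{x-y}{r}\big)d\mu(y)$. $V_t(E)=V(E/t)$ with $E/t=\{x/t:x\in E\}$. For a measurable set $E$, $\|f\|_{L^{p,\infty}(E)}=\sup_{\lambda>0}\lambda|\{x\in E:|f(x)|>\lambda\}|^{1/p}$. *)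

theory Defs
  imports "HOL-Analysis.Analysis"
begin

definition enn_powr :: "ennreal \<Rightarrow> real \<Rightarrow> ennreal" where
  "enn_powr a p = (if a = \<infinity> then \<infinity> else ennreal (enn2real a powr p))"

text \<open>Outer Lebesgue measure (avoids any measurability issue of level sets).\<close>
definition leb_outer :: "'a::euclidean_space set \<Rightarrow> ennreal" where
  "leb_outer A = (INF B \<in> {B \<in> sets lebesgue. A \<subseteq> B}. emeasure lebesgue B)"

definition weak_Lp_norm :: "real \<Rightarrow> 'a::euclidean_space set \<Rightarrow> ('a \<Rightarrow> ereal) \<Rightarrow> ennreal" where
  "weak_Lp_norm p E f =
     (SUP l \<in> {0<..}. ennreal l * enn_powr (leb_outer {x \<in> E. \<bar>f x\<bar> > ereal l}) (1 / p))"

definition phi_scaled :: "real \<Rightarrow> (real \<Rightarrow> real) \<Rightarrow> real \<Rightarrow> 'a::euclidean_space \<Rightarrow> real" where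
  "phi_scaled \<alpha> \<Phi> r x = r powr (- (real DIM('a) - \<alpha>)) * \<Phi> (norm (x /\<^sub>R r))"

definition frac_max :: "real \<Rightarrow> (real \<Rightarrow> real) \<Rightarrow> 'a::euclidean_space measure \<Rightarrow> 'a \<Rightarrow> ennreal" where
  "frac_max \<alpha> \<Phi> \<mu> x =
     (SUP r \<in> {0<..}. ennreal (r powr (- (real DIM('a) - \<alpha>))) *
        (\<integral>\<^sup>+ y. ennreal (\<Phi> (norm ((x - y) /\<^sub>R r))) \<partial>\<mu>))"

text \<open>V_t(E) = V(E/t): the push-forward of V under x \<mapsto> t x.\<close>
definition dilate_measure :: "real \<Rightarrow> 'a::euclidean_space measure \<Rightarrow> 'a measure" where
  "dilate_measure t V = distr V lborel (\<lambda>x. t *\<^sub>R x)"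

end

theory Submission
  imports Defs
begin

lemma two_pow: "(2::real)^k = 2 powr (real k)"
  by (simp add: powr_realpow)
lemma e1: fixes d bt :: real assumes d: "0 < d"
  shows "(d / 2^(k+1)) powr (-bt) = d powr (-bt) * 2 powr (bt * (real k + 1))"
proof -
  have "(2::real)^(k+1) = 2 powr (real k + 1)" using two_pow[of "k+1"] by (simp add: add.commute)
  hence "(d / 2^(k+1)) powr (-bt) = d powr (-bt) / (2 powr (real k + 1)) powr (-bt)"
    using d by (simp add: powr_divide)
  also have "\<dots> = d powr (-bt) * 2 powr (bt * (real k + 1))"
    by (simp add: powr_powr powr_minus divide_inverse mult.commute)
  finally show ?thesis .
qed
lemma e2: fixes d :: real assumes d: "0 < d"
  shows "(d / 2^k)^n = d powr (real n) * 2 powr (- (real k * real n))"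
proof -
  have "(d / 2^k)^n = d^n / (2^k)^n" by (simp add: power_divide)
  also have "((2::real)^k) ^ n = (2 powr real k) powr real n" by (simp add: powr_realpow)
  also have "d^n = d powr real n" using d by (simp add: powr_realpow)
  also have "(2 powr real k) powr real n = (2::real) powr (real k * real n)" by (rule powr_powr)
  also have "d powr real n / 2 powr (real k * real n) = d powr (real n) * 2 powr (- (real k * real n))"
    by (simp only: powr_minus divide_inverse)
  finally show ?thesis .
qed
lemma e3: fixes a :: real shows "(2 powr (-a))^k = 2 powr (- (a * real k))"
proof -
  have "(2 powr (-a))^k = (2 powr (-a)) powr (real k)" by (simp add: powr_realpow)
  thus ?thesis by (simp add: powr_powr)
qed
lemma arith1:
  fixes d bt a w C :: real and k n :: nat
  assumes d: "0 < d" and btd: "bt = real n - a"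
  shows "C * (d / 2^(k+1)) powr (-bt) * (w * (d / 2^k)^n) = C * w * 2 powr bt * d powr a * (2 powr (-a))^k"
proof -
  have "d powr (-bt) * 2 powr (bt * (real k + 1)) * (d powr (real n) * 2 powr (- (real k * real n)))
      = (d powr (-bt) * d powr (real n)) * (2 powr (bt * (real k + 1)) * 2 powr (- (real k * real n)))"
    by (simp only: ac_simps)
  also have "d powr (-bt) * d powr (real n) = d powr a"
    by (simp add: powr_add[symmetric] btd)
  also have "2 powr (bt * (real k + 1)) * 2 powr (- (real k * real n)) = (2::real) powr bt * 2 powr (- (a * real k))"
    by (simp add: powr_add[symmetric] btd algebra_simps)
  finally have *: "d powr (-bt) * 2 powr (bt * (real k + 1)) * (d powr (real n) * 2 powr (- (real k * real n))) = d powr a * (2 powr bt * 2 powr (- (a * real k)))" .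
  show ?thesis unfolding e1[OF d] e2[OF d] e3 using * by (simp only: ac_simps)
qed

lemma nn_integral_translate:
  fixes G :: "'a::euclidean_space \<Rightarrow> ennreal"
  assumes [measurable]: "G \<in> borel_measurable borel"
  shows "(\<integral>\<^sup>+x. G (x - c) \<partial>lborel) = (\<integral>\<^sup>+x. G x \<partial>lborel)"
proof -
  have "(\<integral>\<^sup>+x. G x \<partial>lborel) = (\<integral>\<^sup>+x. G x \<partial>(distr lborel borel ((+) (-c))))"
    by (simp add: lborel_distr_plus)
  also have "\<dots> = (\<integral>\<^sup>+x. G (-c + x) \<partial>lborel)"
    by (rule nn_integral_distr) auto
  finally show ?thesis by simp
qed

lemma leb_outer_le:
  assumes "A \<subseteq> B" "B \<in> sets lborel"
  shows "leb_outer A \<le> emeasure lborel B"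
proof -
  have "leb_outer A \<le> emeasure lebesgue B"
    unfolding leb_outer_def using assms by (intro INF_lower) auto
  also have "emeasure lebesgue B = emeasure lborel B" using assms by simp
  finally show ?thesis .
qed

lemma powr_sum_le:
  fixes X Y q :: real
  assumes "0 \<le> X" "0 \<le> Y" "0 < q" "q \<le> 1"
  shows "(X + Y) powr q \<le> 2 * (X powr q + Y powr q)"
proof -
  have gen: "(X + Y) powr q \<le> 2 * Y powr q" if "0 \<le> X" "X \<le> Y" for X Y :: real
  proof -
    have "(X + Y) powr q \<le> (2 * Y) powr q" using that assms by (intro powr_mono2) auto
    also have "\<dots> = 2 powr q * Y powr q" using that by (simp add: powr_mult)
    also have "2 powr q \<le> (2::real) powr 1" using assms by (intro powr_mono) auto
    hence "2 powr q * Y powr q \<le> 2 * Y powr q" by (intro mult_right_mono) auto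
    finally show ?thesis .
  qed
  show ?thesis
  proof (cases "X \<le> Y")
    case True
    have "(X + Y) powr q \<le> 2 * Y powr q" using gen[OF assms(1) True] .
    also have "\<dots> \<le> 2 * (X powr q + Y powr q)" by simp
    finally show ?thesis .
  next
    case False
    have "(X + Y) powr q \<le> 2 * X powr q" using gen[OF assms(2), of X] False by (simp add: add.commute)
    also have "\<dots> \<le> 2 * (X powr q + Y powr q)" by simp
    finally show ?thesis .
  qed
qed

lemma obtain_R:
  fixes V :: "'a::euclidean_space measure"
  assumes V_sets: "sets V = sets lborel" and fin: "finite_measure V" and e: "0 < e"
  obtains R where "0 \<le> R" "emeasure V (- cball 0 R) \<le> ennreal e"
proof -
  interpret V: finite_measure V by (rule fin)
      define A where "A k = - cball (0::'a) (real k)" for k :: nat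
      have "(\<lambda>k. emeasure V (A k)) \<longlonglongrightarrow> emeasure V (\<Inter>k. A k)"
      proof (rule Lim_emeasure_decseq)
        have "A k \<in> sets borel" for k unfolding A_def by (intro borel_open open_Compl closed_cball)
        thus "range A \<subseteq> sets V" using V_sets by auto
        show "antimono_on UNIV A" by (rule antimonoI) (auto simp: A_def)
        show "emeasure V (A i) \<noteq> \<infinity>" for i by (simp add: V.emeasure_eq_measure)
      qed
      moreover have "(\<Inter>k. A k) = {}"
      proof -
        have "x \<notin> (\<Inter>k. A k)" for x
        proof -
          obtain k :: nat where "norm x \<le> real k" using real_arch_simple by blast
          thus ?thesis by (auto simp: A_def)
        qed
        thus ?thesis by blast
      qed
      ultimately have "(\<lambda>k. emeasure V (A k)) \<longlonglongrightarrow> 0" by simp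
      hence "\<forall>\<^sub>F k in sequentially. emeasure V (A k) < ennreal e" using e by (intro order_tendstoD(2)) auto
      then obtain k where "emeasure V (A k) < ennreal e" by (auto simp: eventually_sequentially)
      thus ?thesis using that[of "real k"] by (simp add: A_def)
qed

locale corset =
  fixes \<alpha> :: real and \<Phi> :: "real \<Rightarrow> real" and e1 :: "'a::euclidean_space" and bt CC :: real
  assumes alpha: "0 < \<alpha>" "\<alpha> < real DIM('a)"
    and Phi_nonneg: "\<And>s. 0 \<le> s \<Longrightarrow> 0 \<le> \<Phi> s"
    and Phi_decr: "\<And>s s'. 0 \<le> s \<Longrightarrow> s \<le> s' \<Longrightarrow> \<Phi> s' \<le> \<Phi> s"
    and e1: "e1 \<in> Basis"
    and sup_fin: "bdd_above ((\<lambda>r. phi_scaled \<alpha> \<Phi> r e1) ` {0<..})"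
    and bt_def: "bt = real DIM('a) - \<alpha>"
    and CC_def: "CC = Sup ((\<lambda>r. phi_scaled \<alpha> \<Phi> r e1) ` {0<..})"
begin

lemma bt_pos: "0 < bt" using alpha bt_def by simp

lemma phi_x: "0 < r \<Longrightarrow> phi_scaled \<alpha> \<Phi> r (x::'a) = r powr (- bt) * \<Phi> (norm x / r)"
  by (simp add: phi_scaled_def bt_def divide_inverse mult.commute)

lemma phi_e1: "0 < r \<Longrightarrow> phi_scaled \<alpha> \<Phi> r e1 = r powr (- bt) * \<Phi> (1 / r)"
  using e1 by (simp add: phi_x)

lemma phi_le_CC: "0 < r \<Longrightarrow> phi_scaled \<alpha> \<Phi> r e1 \<le> CC"
  unfolding CC_def by (rule cSUP_upper[OF _ sup_fin]) auto

lemma CC_nonneg: "0 \<le> CC"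
proof -
  have "0 \<le> phi_scaled \<alpha> \<Phi> 1 e1" using phi_e1[of 1] Phi_nonneg[of 1] by simp
  then show ?thesis using phi_le_CC[of 1] by simp
qed

lemma kernel_le:
  assumes r: "0 < r" and s: "0 < s"
  shows "r powr (- bt) * \<Phi> (s / r) \<le> CC * s powr (- bt)"
proof -
  define u where "u = r / s"
  have u: "0 < u" using r s by (simp add: u_def)
  have ru: "r = s * u" using s by (simp add: u_def)
  have "r powr (- bt) * \<Phi> (s / r) = s powr (- bt) * (u powr (- bt) * \<Phi> (1 / u))"
    using s u by (simp add: ru powr_mult)
  also have "u powr (- bt) * \<Phi> (1 / u) \<le> CC" using phi_le_CC[OF u] phi_e1[OF u] by simp
  hence "s powr (- bt) * (u powr (- bt) * \<Phi> (1 / u)) \<le> s powr (- bt) * CC"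
    by (intro mult_left_mono) auto
  finally show ?thesis by (simp add: mult.commute)
qed

lemma sup_bdd:
  assumes s: "0 < s"
  shows "bdd_above ((\<lambda>r. r powr (- bt) * \<Phi> (s / r)) ` {0<..})"
  using kernel_le[OF _ s] by (intro bdd_aboveI2[where M="CC * s powr (- bt)"]) auto

lemma sup_eq:
  assumes s: "0 < s"
  shows "Sup ((\<lambda>r. r powr (- bt) * \<Phi> (s / r)) ` {0<..}) = CC * s powr (- bt)"
    (is "Sup ?A = _")
proof (rule antisym)
  show "Sup ?A \<le> CC * s powr (- bt)"
    using kernel_le[OF _ s] by (intro cSUP_least) auto
next
  have "CC \<le> Sup ?A * s powr bt"
    unfolding CC_def
  proof (rule cSUP_least)
    fix u :: real assume "u \<in> {0<..}"
    hence u: "0 < u" by simp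
    have "phi_scaled \<alpha> \<Phi> u e1 = s powr bt * ((s * u) powr (- bt) * \<Phi> (s / (s * u)))"
      using u s by (simp add: phi_e1 powr_mult powr_minus field_simps)
    also have "(s * u) powr (- bt) * \<Phi> (s / (s * u)) \<le> Sup ?A"
      using s u by (intro cSUP_upper[OF _ sup_bdd[OF s]]) auto
    hence "s powr bt * ((s * u) powr (- bt) * \<Phi> (s / (s * u))) \<le> s powr bt * Sup ?A"
      by (intro mult_left_mono) auto
    finally show "phi_scaled \<alpha> \<Phi> u e1 \<le> Sup ?A * s powr bt" by (simp add: mult.commute)
  qed auto
  hence "CC * s powr (- bt) \<le> Sup ?A * s powr bt * s powr (- bt)"
    using s by (intro mult_right_mono) auto
  also have "\<dots> = Sup ?A" using s by (simp add: powr_minus)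
  finally show "CC * s powr (- bt) \<le> Sup ?A" .
qed

lemma sup_phi_x:
  assumes "(x::'a) \<noteq> 0"
  shows "Sup ((\<lambda>r. phi_scaled \<alpha> \<Phi> r x) ` {0<..}) = CC * norm x powr (- bt)"
proof -
  have "(\<lambda>r. phi_scaled \<alpha> \<Phi> r x) ` {0<..} = (\<lambda>r. r powr (- bt) * \<Phi> (norm x / r)) ` {0<..}"
    by (intro image_cong) (auto simp: phi_x)
  then show ?thesis using sup_eq[of "norm x"] assms by simp
qed


lemma Phi'_meas: "(\<lambda>s. \<Phi> (max s 0)) \<in> borel_measurable borel"
proof -
  have "mono (\<lambda>s. - \<Phi> (max s 0))"
    by (rule monoI) (simp add: Phi_decr)
  hence "(\<lambda>s. - \<Phi> (max s 0)) \<in> borel_measurable borel" by (rule borel_measurable_mono)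
  hence "(\<lambda>s. - (- \<Phi> (max s 0))) \<in> borel_measurable borel" by measurable
  thus ?thesis by simp
qed

lemma Phi_norm_meas:
  assumes "f \<in> borel_measurable M"
  shows "(\<lambda>y. \<Phi> (norm (f y :: 'b::real_normed_vector))) \<in> borel_measurable M"
proof -
  have "(\<lambda>y. \<Phi> (max (norm (f y)) 0)) \<in> borel_measurable M"
  proof -
    have "(\<lambda>y. norm (f y)) \<in> borel_measurable M" using assms by measurable
    from measurable_compose[OF this Phi'_meas] show ?thesis by simp
  qed
  thus ?thesis by simp
qed

lemma Phi_norm_enn_meas:
  assumes "f \<in> borel_measurable M"
  shows "(\<lambda>y. ennreal (\<Phi> (norm (f y :: 'b::real_normed_vector)))) \<in> borel_measurable M"
  using Phi_norm_meas[OF assms] by measurable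

definition Kf :: "'a \<Rightarrow> ennreal" where
  "Kf z = (if z = 0 then \<infinity> else ennreal (CC * norm z powr (- bt)))"

lemma Kf_meas[measurable]: "Kf \<in> borel_measurable borel"
  unfolding Kf_def by measurable

lemma kern_ennreal:
  assumes r: "0 < r"
  shows "ennreal (r powr (- bt)) * ennreal (\<Phi> (norm (z /\<^sub>R r))) \<le> Kf z"
proof (cases "z = 0")
  case True then show ?thesis by (simp add: Kf_def)
next
  case False
  have "r powr (- bt) * \<Phi> (norm z / r) \<le> CC * norm z powr (- bt)"
    using kernel_le[OF r] False by simp
  moreover have "ennreal (r powr (- bt)) * ennreal (\<Phi> (norm (z /\<^sub>R r))) = ennreal (r powr (- bt) * \<Phi> (norm z / r))"
    using r Phi_nonneg by (simp add: ennreal_mult divide_inverse mult.commute)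
  ultimately show ?thesis using False by (simp add: Kf_def ennreal_leI)
qed

lemma frac_max_dilate:
  assumes V_sets: "sets V = sets lborel"
  shows "frac_max \<alpha> \<Phi> (dilate_measure t V) (x::'a) =
     (SUP r\<in>{0<..}. ennreal (r powr (- bt)) *
        (\<integral>\<^sup>+ y. ennreal (\<Phi> (norm ((x - t *\<^sub>R y) /\<^sub>R r))) \<partial>V))"
proof -
  have T: "(\<lambda>y::'a. t *\<^sub>R y) \<in> measurable V lborel"
  proof -
    have e: "measurable V lborel = measurable lborel lborel" by (rule measurable_cong_sets[OF V_sets refl])
    have "(\<lambda>y::'a. t *\<^sub>R y) \<in> measurable lborel lborel" by simp
    thus ?thesis by (simp only: e)
  qed
  have eq: "\<And>r. (\<integral>\<^sup>+ y. ennreal (\<Phi> (norm ((x - y) /\<^sub>R r))) \<partial>dilate_measure t V) =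
      (\<integral>\<^sup>+ y. ennreal (\<Phi> (norm ((x - t *\<^sub>R y) /\<^sub>R r))) \<partial>V)"
    unfolding dilate_measure_def
    by (subst nn_integral_distr[OF T], rule Phi_norm_enn_meas, simp_all)
  show ?thesis unfolding frac_max_def bt_def by (rule SUP_cong) (simp_all only: eq)
qed


lemma V_meas_eq:
  assumes "sets V = sets (lborel::'a measure)"
  shows "measurable V N = measurable lborel N"
  by (rule measurable_cong_sets[OF assms refl])

lemma PV_meas_eq:
  assumes "sets V = sets (lborel::'a measure)"
  shows "measurable (lborel \<Otimes>\<^sub>M V) N = measurable (lborel \<Otimes>\<^sub>M (lborel::'a measure)) N"
  by (rule measurable_cong_sets[OF sets_pair_measure_cong[OF refl assms] refl])

lemma upper_bound:
  assumes V_sets: "sets V = sets (lborel::'a measure)"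
    and t: "0 \<le> t" and R: "0 \<le> R" and d: "0 < norm x - t * R"
  shows "frac_max \<alpha> \<Phi> (dilate_measure t V) x \<le>
     ennreal (CC * (norm x - t * R) powr (- bt)) * emeasure V UNIV +
     (\<integral>\<^sup>+ y. indicator (- cball 0 R) y * Kf (x - t *\<^sub>R y) \<partial>V)"
proof -
  note VM = V_meas_eq[OF V_sets]
  define c where "c = CC * (norm x - t * R) powr (- bt)"
  have c0: "0 \<le> c" using CC_nonneg by (simp add: c_def)
  have Kmeas: "(\<lambda>y. Kf (x - t *\<^sub>R y)) \<in> borel_measurable V" unfolding VM by measurable
  have ptw: "Kf (x - t *\<^sub>R y) \<le> ennreal c * indicator (cball 0 R) y + indicator (- cball 0 R) y * Kf (x - t *\<^sub>R y)" for y
  proof (cases "y \<in> cball 0 R")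
    case True
    have "norm (t *\<^sub>R y) \<le> t * R" using True t by (simp add: mult_left_mono)
    hence n: "norm x - t * R \<le> norm (x - t *\<^sub>R y)" using norm_triangle_ineq2[of x "t *\<^sub>R y"] by linarith
    hence nz: "x - t *\<^sub>R y \<noteq> 0" using d by auto
    have "norm (x - t *\<^sub>R y) powr (- bt) \<le> (norm x - t * R) powr (- bt)"
      using n d bt_pos by (intro powr_mono2') auto
    hence "CC * norm (x - t *\<^sub>R y) powr (- bt) \<le> c" unfolding c_def using CC_nonneg by (rule mult_left_mono)
    then show ?thesis using True nz by (simp add: Kf_def ennreal_leI)
  next
    case False then show ?thesis by simp
  qed
  have "frac_max \<alpha> \<Phi> (dilate_measure t V) x \<le> ennreal c * emeasure V UNIV +
     (\<integral>\<^sup>+ y. indicator (- cball 0 R) y * Kf (x - t *\<^sub>R y) \<partial>V)"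
    unfolding frac_max_dilate[OF V_sets]
  proof (rule SUP_least)
    fix r :: real assume "r \<in> {0<..}"
    hence r: "0 < r" by simp
    have fm: "(\<lambda>y. ennreal (\<Phi> (norm ((x - t *\<^sub>R y) /\<^sub>R r)))) \<in> borel_measurable V"
      unfolding VM by (rule Phi_norm_enn_meas) simp
    have "ennreal (r powr (- bt)) * (\<integral>\<^sup>+ y. ennreal (\<Phi> (norm ((x - t *\<^sub>R y) /\<^sub>R r))) \<partial>V)
        = (\<integral>\<^sup>+ y. ennreal (r powr (- bt)) * ennreal (\<Phi> (norm ((x - t *\<^sub>R y) /\<^sub>R r))) \<partial>V)"
      by (rule nn_integral_cmult[OF fm, symmetric])
    also have "\<dots> \<le> (\<integral>\<^sup>+ y. Kf (x - t *\<^sub>R y) \<partial>V)"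
      by (intro nn_integral_mono kern_ennreal r)
    also have "\<dots> \<le> (\<integral>\<^sup>+ y. ennreal c * indicator (cball 0 R) y + indicator (- cball 0 R) y * Kf (x - t *\<^sub>R y) \<partial>V)"
      by (intro nn_integral_mono ptw)
    also have "\<dots> = ennreal c * emeasure V (cball 0 R) + (\<integral>\<^sup>+ y. indicator (- cball 0 R) y * Kf (x - t *\<^sub>R y) \<partial>V)"
    proof -
      have cb: "cball 0 R \<in> sets V" "- cball 0 R \<in> sets V" using V_sets by auto
      have "(\<lambda>y. indicator (- cball 0 R) y * Kf (x - t *\<^sub>R y)) \<in> borel_measurable V"
        using Kmeas cb by measurable
      moreover have "(\<lambda>y. ennreal c * indicator (cball 0 R) y) \<in> borel_measurable V" using cb by measurable
      ultimately show ?thesis using cb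
        by (subst nn_integral_add) (auto simp: nn_integral_cmult_indicator)
    qed
    also have "\<dots> \<le> ennreal c * emeasure V UNIV + (\<integral>\<^sup>+ y. indicator (- cball 0 R) y * Kf (x - t *\<^sub>R y) \<partial>V)"
    proof -
      have "emeasure V (cball 0 R) \<le> emeasure V UNIV"
        using V_sets by (intro emeasure_mono) auto
      thus ?thesis by (intro add_right_mono mult_left_mono) auto
    qed
    finally show "ennreal (r powr (- bt)) * (\<integral>\<^sup>+ y. ennreal (\<Phi> (norm ((x - t *\<^sub>R y) /\<^sub>R r))) \<partial>V)
      \<le> ennreal c * emeasure V UNIV + (\<integral>\<^sup>+ y. indicator (- cball 0 R) y * Kf (x - t *\<^sub>R y) \<partial>V)" .
  qed
  then show ?thesis by (simp add: c_def)
qed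

lemma ennreal_Sup_le:
  assumes "I \<noteq> {}" "bdd_above (a ` I)"
  shows "ennreal (Sup (a ` I)) \<le> (SUP i\<in>I. ennreal (a i))"
proof (cases "(SUP i\<in>I. ennreal (a i)) = \<infinity>")
  case True then show ?thesis unfolding True by simp
next
  case False
  then obtain u where u: "(SUP i\<in>I. ennreal (a i)) = ennreal u" "0 \<le> u"
    by (cases "(SUP i\<in>I. ennreal (a i))") auto
  have "a i \<le> u" if "i \<in> I" for i
  proof -
    have "ennreal (a i) \<le> ennreal u" using u(1) SUP_upper[OF that, of "\<lambda>i. ennreal (a i)"] by simp
    thus ?thesis using u(2) by (simp add: ennreal_le_iff)
  qed
  hence "Sup (a ` I) \<le> u" using assms by (intro cSUP_least) auto
  then show ?thesis using u by (simp add: ennreal_leI)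
qed

lemma lower_bound:
  assumes V_sets: "sets V = sets (lborel::'a measure)"
    and t: "0 \<le> t" and R: "0 \<le> R" and x: "x \<noteq> 0"
  shows "ennreal (CC * (norm x + t * R) powr (- bt)) * emeasure V (cball 0 R)
      \<le> frac_max \<alpha> \<Phi> (dilate_measure t V) x"
proof -
  note VM = V_meas_eq[OF V_sets]
  define s where "s = norm x + t * R"
  have s: "0 < s" using x t R by (simp add: s_def add_pos_nonneg)
  have cb: "cball 0 R \<in> sets V" using V_sets by auto
  have key: "ennreal (r powr (- bt) * \<Phi> (s / r)) * emeasure V (cball 0 R) \<le>
     ennreal (r powr (- bt)) * (\<integral>\<^sup>+ y. ennreal (\<Phi> (norm ((x - t *\<^sub>R y) /\<^sub>R r))) \<partial>V)" if r: "0 < r" for r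
  proof -
    have "ennreal (\<Phi> (s / r)) * emeasure V (cball 0 R) = (\<integral>\<^sup>+ y. ennreal (\<Phi> (s / r)) * indicator (cball 0 R) y \<partial>V)"
      using cb by (simp add: nn_integral_cmult_indicator)
    also have "\<dots> \<le> (\<integral>\<^sup>+ y. ennreal (\<Phi> (norm ((x - t *\<^sub>R y) /\<^sub>R r))) \<partial>V)"
    proof (intro nn_integral_mono)
      fix y
      show "ennreal (\<Phi> (s / r)) * indicator (cball 0 R) y \<le> ennreal (\<Phi> (norm ((x - t *\<^sub>R y) /\<^sub>R r)))"
      proof (cases "y \<in> cball 0 R")
        case True
        have "norm (t *\<^sub>R y) \<le> t * R" using True t by (simp add: mult_left_mono)
        hence "norm (x - t *\<^sub>R y) \<le> s" unfolding s_def using norm_triangle_ineq4[of x "t *\<^sub>R y"] by linarith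
        moreover have "norm ((x - t *\<^sub>R y) /\<^sub>R r) = norm (x - t *\<^sub>R y) / r" using r by (simp add: divide_inverse mult.commute)
        ultimately have "norm ((x - t *\<^sub>R y) /\<^sub>R r) \<le> s / r" using r by (simp add: divide_right_mono)
        hence "\<Phi> (s / r) \<le> \<Phi> (norm ((x - t *\<^sub>R y) /\<^sub>R r))" by (intro Phi_decr) auto
        then show ?thesis using True by (simp add: ennreal_leI)
      qed simp
    qed
    finally have "ennreal (\<Phi> (s / r)) * emeasure V (cball 0 R) \<le> (\<integral>\<^sup>+ y. ennreal (\<Phi> (norm ((x - t *\<^sub>R y) /\<^sub>R r))) \<partial>V)" .
    hence "ennreal (r powr (- bt)) * (ennreal (\<Phi> (s / r)) * emeasure V (cball 0 R)) \<le> ennreal (r powr (- bt)) * (\<integral>\<^sup>+ y. ennreal (\<Phi> (norm ((x - t *\<^sub>R y) /\<^sub>R r))) \<partial>V)"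
      by (rule mult_left_mono) simp
    moreover have "ennreal (r powr (- bt) * \<Phi> (s / r)) = ennreal (r powr (- bt)) * ennreal (\<Phi> (s / r))"
      using Phi_nonneg[of "s/r"] r s by (simp add: ennreal_mult)
    ultimately show ?thesis by (simp add: mult.assoc)
  qed
  have "ennreal (CC * s powr (- bt)) * emeasure V (cball 0 R) = ennreal (Sup ((\<lambda>r. r powr (- bt) * \<Phi> (s / r)) ` {0<..})) * emeasure V (cball 0 R)"
    using sup_eq[OF s] by simp
  also have "\<dots> \<le> (SUP r\<in>{0<..}. ennreal (r powr (- bt) * \<Phi> (s / r))) * emeasure V (cball 0 R)"
    by (intro mult_right_mono ennreal_Sup_le sup_bdd s) auto
  also have "\<dots> = (SUP r\<in>{0<..}. ennreal (r powr (- bt) * \<Phi> (s / r)) * emeasure V (cball 0 R))"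
    by (rule SUP_mult_right_ennreal) 
  also have "\<dots> \<le> frac_max \<alpha> \<Phi> (dilate_measure t V) x"
    unfolding frac_max_dilate[OF V_sets]
    by (rule SUP_mono) (blast intro: key)
  finally show ?thesis by (simp add: s_def)
qed


lemma ball_int:
  assumes dl: "0 < dl"
  shows "(\<integral>\<^sup>+z. Kf z * indicator (ball 0 dl) z \<partial>lborel)
     \<le> ennreal (CC * unit_ball_vol (real DIM('a)) * 2 powr bt / (1 - 2 powr (-\<alpha>)) * dl powr \<alpha>)"
proof -
  define w where "w = unit_ball_vol (real DIM('a))"
  have w0: "0 \<le> w" by (simp add: w_def)
  define S where "S k = - ball (0::'a) (dl / 2^(k+1)) \<inter> ball 0 (dl / 2^k)" for k :: nat
  have Ssets: "S k \<in> sets borel" for k unfolding S_def by auto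
  have cover: "indicator (ball 0 dl) z \<le> (\<Sum>k. indicator (S k) z :: ennreal)" if z: "z \<noteq> 0" for z :: 'a
  proof (cases "z \<in> ball 0 dl")
    case False then show ?thesis by simp
  next
    case True
    have nz: "0 < norm z" using z by simp
    have ex: "\<exists>k. dl / 2^(k+1) \<le> norm z"
    proof -
      obtain k where "dl / norm z < 2^k" using real_arch_pow[of 2 "dl / norm z"] by auto
      hence "dl < 2^k * norm z" using nz by (simp add: divide_less_eq)
      moreover have "2^k * norm z \<le> 2^(k+1) * norm z" using nz by simp
      ultimately have "dl \<le> 2^(k+1) * norm z" by linarith
      hence "dl / 2^(k+1) \<le> norm z" by (simp add: divide_le_eq mult.commute)
      thus ?thesis by blast
    qed
    define k where "k = (LEAST k. dl / 2^(k+1) \<le> norm z)"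
    have k1: "dl / 2^(k+1) \<le> norm z" unfolding k_def by (rule LeastI_ex[OF ex])
    have k2: "norm z < dl / 2^k"
    proof (cases k)
      case 0 then show ?thesis using True by simp
    next
      case (Suc j)
      have "\<not> dl / 2^(j+1) \<le> norm z"
      proof
        assume "dl / 2^(j+1) \<le> norm z"
        hence "k \<le> j" unfolding k_def by (rule Least_le)
        thus False using Suc by simp
      qed
      then show ?thesis using Suc by simp
    qed
    have "z \<in> S k" using k1 k2 by (simp add: S_def)
    hence "indicator (S k) z = (1::ennreal)" by simp
    moreover have "indicator (S k) z \<le> (\<Sum>k. indicator (S k) z :: ennreal)"
      by (metis ennreal_suminf_lessD not_le less_irrefl)
    ultimately show ?thesis using True by simp
  qed
  define c where "c k = CC * (dl / 2^(k+1)) powr (- bt)" for k :: nat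
  have shell: "(\<integral>\<^sup>+z. Kf z * indicator (S k) z \<partial>lborel) \<le> ennreal (c k * (w * (dl / 2^k)^DIM('a)))" for k
  proof -
    have "(\<integral>\<^sup>+z. Kf z * indicator (S k) z \<partial>lborel) \<le> (\<integral>\<^sup>+z. ennreal (c k) * indicator (ball (0::'a) (dl / 2^k)) z \<partial>lborel)"
    proof (rule nn_integral_mono)
      fix z :: 'a
      show "Kf z * indicator (S k) z \<le> ennreal (c k) * indicator (ball 0 (dl / 2^k)) z"
      proof (cases "z \<in> S k")
        case True
        hence n1: "dl / 2^(k+1) \<le> norm z" and n2: "z \<in> ball 0 (dl / 2^k)" by (auto simp: S_def)
        have pos: "0 < dl / 2^(k+1)" using dl by simp
        hence nz: "z \<noteq> 0" using n1 by auto
        have "norm z powr (- bt) \<le> (dl / 2^(k+1)) powr (- bt)"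
          using n1 pos bt_pos by (intro powr_mono2') auto
        hence "CC * norm z powr (- bt) \<le> c k" unfolding c_def using CC_nonneg by (rule mult_left_mono)
        then show ?thesis using True n2 nz by (simp add: Kf_def ennreal_leI)
      qed simp
    qed
    also have "\<dots> = ennreal (c k) * ennreal (w * (dl / 2^k)^DIM('a))"
      using dl by (simp add: nn_integral_cmult_indicator emeasure_ball w_def)
    also have "\<dots> = ennreal (c k * (w * (dl / 2^k)^DIM('a)))"
      using CC_nonneg w0 dl by (simp add: ennreal_mult c_def)
    finally show ?thesis .
  qed
  define q :: real where "q = 2 powr (- \<alpha>)"
  have "(2::real) powr (- \<alpha>) < 2 powr 0" using alpha by (intro powr_less_mono) auto
  hence q: "0 < q" "q < 1" by (auto simp: q_def)
  define A where "A = CC * w * 2 powr bt * dl powr \<alpha>"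
  have A0: "0 \<le> A" using CC_nonneg w0 by (simp add: A_def)
  have ck: "c k * (w * (dl / 2^k)^DIM('a)) = A * q^k" for k
    unfolding c_def A_def q_def by (rule arith1[OF dl]) (simp add: bt_def)
  have summ: "summable (\<lambda>k. A * q^k)" using q by (intro summable_mult summable_geometric) simp
  have "(\<integral>\<^sup>+z. Kf z * indicator (ball 0 dl) z \<partial>lborel) \<le> (\<integral>\<^sup>+z. (\<Sum>k. Kf z * indicator (S k) z) \<partial>lborel)"
  proof (rule nn_integral_mono_AE)
    show "AE z in lborel. Kf z * indicator (ball 0 dl) z \<le> (\<Sum>k. Kf z * indicator (S k) z)"
      using AE_lborel_singleton[of "0::'a"]
    proof eventually_elim
      case (elim z)
      then show ?case using cover[OF elim] by (simp add: mult_left_mono)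
    qed
  qed
  also have "\<dots> = (\<Sum>k. \<integral>\<^sup>+z. Kf z * indicator (S k) z \<partial>lborel)"
    by (intro nn_integral_suminf borel_measurable_times_ennreal borel_measurable_indicator) (simp_all add: Ssets)
  also have "\<dots> \<le> (\<Sum>k. ennreal (A * q^k))"
    using shell ck by (intro suminf_le) auto
  also have "\<dots> = ennreal (\<Sum>k. A * q^k)"
    using summ A0 q by (intro suminf_ennreal2) auto
  also have "(\<Sum>k. A * q^k) = A / (1 - q)"
    using q by (simp add: suminf_mult suminf_geometric)
  also have "A / (1 - q) = CC * w * 2 powr bt / (1 - 2 powr (-\<alpha>)) * dl powr \<alpha>"
    by (simp add: A_def q_def)
  finally show ?thesis by (simp add: w_def)
qed


lemma weak_T:
  assumes V_sets: "sets V = sets (lborel::'a measure)" and fin: "finite_measure V"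
    and t: "0 < t" and e: "0 < e" and eV: "emeasure V (- cball 0 R) \<le> ennreal e" and mu: "0 < mu"
  shows "\<exists>B \<in> sets lborel. {x. ennreal mu < (\<integral>\<^sup>+y. indicator (- cball 0 R) y * Kf (x - t *\<^sub>R y) \<partial>V)} \<subseteq> B
     \<and> emeasure lborel B \<le> ennreal (2 * (CC * unit_ball_vol (real DIM('a)) * 2 powr bt / (1 - 2 powr (-\<alpha>)))
            * (2 * (CC + 1)) powr (\<alpha> / bt) * (e / mu) powr (real DIM('a) / bt))"
proof -
  interpret V: finite_measure V by (rule fin)
  interpret LV: pair_sigma_finite lborel V ..
  define Ai where "Ai = CC * unit_ball_vol (real DIM('a)) * 2 powr bt / (1 - 2 powr (-\<alpha>))"
  have "(2::real) powr (- \<alpha>) < 2 powr 0" using alpha by (intro powr_less_mono) auto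
  hence Ai0: "0 \<le> Ai" using CC_nonneg by (simp add: Ai_def)
  define X where "X = 2 * (CC + 1) * e / mu"
  have X0: "0 < X" using CC_nonneg e mu by (simp add: X_def)
  define dl where "dl = X powr (1 / bt)"
  have dl: "0 < dl" using X0 by (simp add: dl_def)
  have dlb: "dl powr (- bt) = mu / (2 * (CC + 1) * e)"
    using X0 bt_pos CC_nonneg e mu by (simp add: dl_def powr_powr powr_minus X_def)
  define G where "G z = Kf z * indicator (ball 0 dl) z" for z :: 'a
  have [measurable]: "ball (0::'a) dl \<in> sets borel" "cball (0::'a) R \<in> sets borel" "- cball (0::'a) R \<in> sets borel" by auto
  have Gm[measurable]: "G \<in> borel_measurable borel" unfolding G_def by measurable
  have Kle: "Kf z \<le> G z + ennreal (mu / (2 * e))" for z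
  proof (cases "z \<in> ball 0 dl")
    case True then show ?thesis by (simp add: G_def)
  next
    case False
    hence n: "dl \<le> norm z" by simp
    hence nz: "z \<noteq> 0" using dl by auto
    have "norm z powr (- bt) \<le> dl powr (- bt)"
      using n dl bt_pos by (intro powr_mono2') auto
    hence "CC * norm z powr (- bt) \<le> (CC + 1) * dl powr (- bt)"
      using CC_nonneg by (intro mult_mono) auto
    also have "\<dots> = mu / (2 * e)"
    proof -
      have p: "0 < e * 2 + CC * (e * 2)" using CC_nonneg e by (simp add: add_pos_nonneg)
      show ?thesis unfolding dlb using p e by (simp add: field_simps)
    qed
    finally have "ennreal (CC * norm z powr (- bt)) \<le> ennreal (mu / (2 * e))" by (rule ennreal_leI)
    thus ?thesis using nz by (simp add: Kf_def add_increasing)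
  qed
  define T1 where "T1 x = (\<integral>\<^sup>+y. indicator (- cball 0 R) y * G (x - t *\<^sub>R y) \<partial>V)" for x
  note PM = PV_meas_eq[OF V_sets]
  note VM = V_meas_eq[OF V_sets]
  have Fm: "(\<lambda>(x, y). indicator (- cball 0 R) y * G (x - t *\<^sub>R y)) \<in> borel_measurable (lborel \<Otimes>\<^sub>M V)"
    unfolding PM by measurable
  have T1m: "T1 \<in> borel_measurable lborel"
    unfolding T1_def using Fm by (rule V.borel_measurable_nn_integral)
  have T_le: "(\<integral>\<^sup>+y. indicator (- cball 0 R) y * Kf (x - t *\<^sub>R y) \<partial>V) \<le> T1 x + ennreal (mu / 2)" for x
  proof -
    have "(\<integral>\<^sup>+y. indicator (- cball 0 R) y * Kf (x - t *\<^sub>R y) \<partial>V)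
        \<le> (\<integral>\<^sup>+y. indicator (- cball 0 R) y * G (x - t *\<^sub>R y) + ennreal (mu / (2 * e)) * indicator (- cball 0 R) y \<partial>V)"
    proof (rule nn_integral_mono)
      fix y
      show "indicator (- cball 0 R) y * Kf (x - t *\<^sub>R y) \<le> indicator (- cball 0 R) y * G (x - t *\<^sub>R y) + ennreal (mu / (2 * e)) * indicator (- cball 0 R) y"
        using Kle[of "x - t *\<^sub>R y"] by (cases "y \<in> cball 0 R") auto
    qed
    also have "\<dots> = T1 x + ennreal (mu / (2 * e)) * emeasure V (- cball 0 R)"
    proof -
      have "(\<lambda>y. indicator (- cball 0 R) y * G (x - t *\<^sub>R y)) \<in> borel_measurable V" unfolding VM by measurable
      moreover have "(\<lambda>y. ennreal (mu / (2 * e)) * indicator (- cball 0 R) y) \<in> borel_measurable V" unfolding VM by measurable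
      moreover have "- cball 0 R \<in> sets V" using V_sets by auto
      ultimately show ?thesis unfolding T1_def
        by (subst nn_integral_add) (auto simp: nn_integral_cmult_indicator)
    qed
    also have "ennreal (mu / (2 * e)) * emeasure V (- cball 0 R) \<le> ennreal (mu / (2 * e)) * ennreal e"
      by (intro mult_left_mono eV) auto
    also have "ennreal (mu / (2 * e)) * ennreal e = ennreal (mu / 2)"
      using e mu by (simp add: ennreal_mult[symmetric])
    finally show ?thesis by (simp add: add_left_mono)
  qed
  define B where "B = {x \<in> UNIV. 1 \<le> ennreal (2 / mu) * T1 x}"
  have Bs: "B \<in> sets lborel" unfolding B_def using T1m by measurable
  have sub: "{x. ennreal mu < (\<integral>\<^sup>+y. indicator (- cball 0 R) y * Kf (x - t *\<^sub>R y) \<partial>V)} \<subseteq> B"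
  proof
    fix x assume "x \<in> {x. ennreal mu < (\<integral>\<^sup>+y. indicator (- cball 0 R) y * Kf (x - t *\<^sub>R y) \<partial>V)}"
    hence lt: "ennreal mu < T1 x + ennreal (mu / 2)" using T_le[of x] by simp
    have T1x: "ennreal (mu / 2) \<le> T1 x"
    proof (rule ccontr)
      assume "\<not> ennreal (mu / 2) \<le> T1 x"
      hence "T1 x + ennreal (mu / 2) \<le> ennreal (mu / 2) + ennreal (mu / 2)" by (simp add: add_right_mono)
      also have "\<dots> = ennreal mu" using mu by (simp add: ennreal_plus[symmetric])
      finally show False using lt by simp
    qed
    have "1 = ennreal (2 / mu) * ennreal (mu / 2)" using mu by (simp add: ennreal_mult[symmetric])
    also have "\<dots> \<le> ennreal (2 / mu) * T1 x" by (intro mult_left_mono T1x) auto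
    finally show "x \<in> B" by (simp add: B_def)
  qed
  have "emeasure lborel B \<le> ennreal (2 / mu) * (\<integral>\<^sup>+x. T1 x * indicator UNIV x \<partial>lborel)"
    unfolding B_def using T1m by (intro nn_integral_Markov_inequality) auto
  also have "(\<integral>\<^sup>+x. T1 x * indicator UNIV x \<partial>lborel) = (\<integral>\<^sup>+x. T1 x \<partial>lborel)" by simp
  also have "\<dots> = (\<integral>\<^sup>+y. (\<integral>\<^sup>+x. indicator (- cball 0 R) y * G (x - t *\<^sub>R y) \<partial>lborel) \<partial>V)"
    unfolding T1_def using LV.Fubini'[OF Fm] by simp
  also have "\<dots> = (\<integral>\<^sup>+y. (\<integral>\<^sup>+z. G z \<partial>lborel) * indicator (- cball 0 R) y \<partial>V)"
  proof (rule nn_integral_cong)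
    fix y :: 'a
    have "(\<integral>\<^sup>+x. indicator (- cball 0 R) y * G (x - t *\<^sub>R y) \<partial>lborel) = indicator (- cball 0 R) y * (\<integral>\<^sup>+x. G (x - t *\<^sub>R y) \<partial>lborel)"
      by (rule nn_integral_cmult) measurable
    also have "(\<integral>\<^sup>+x. G (x - t *\<^sub>R y) \<partial>lborel) = (\<integral>\<^sup>+z. G z \<partial>lborel)"
      by (rule nn_integral_translate[OF Gm])
    finally show "(\<integral>\<^sup>+x. indicator (- cball 0 R) y * G (x - t *\<^sub>R y) \<partial>lborel) = (\<integral>\<^sup>+z. G z \<partial>lborel) * indicator (- cball 0 R) y"
      by (simp add: mult.commute)
  qed
  also have "\<dots> = (\<integral>\<^sup>+z. G z \<partial>lborel) * emeasure V (- cball 0 R)"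
    using V_sets by (subst nn_integral_cmult_indicator) auto
  also have "\<dots> \<le> ennreal (Ai * dl powr \<alpha>) * ennreal e"
    using ball_int[OF dl] eV unfolding G_def Ai_def by (intro mult_mono) auto
  finally have "emeasure lborel B \<le> ennreal (2 / mu) * (ennreal (Ai * dl powr \<alpha>) * ennreal e)"
    by (simp add: mult_left_mono)
  also have "\<dots> = ennreal (2 / mu * (Ai * dl powr \<alpha>) * e)"
    using mu Ai0 e by (simp add: ennreal_mult[symmetric] mult.assoc)
  also have "2 / mu * (Ai * dl powr \<alpha>) * e = 2 * Ai * (2 * (CC + 1)) powr (\<alpha> / bt) * (e / mu) powr (real DIM('a) / bt)"
  proof -
    have d1: "dl powr \<alpha> = (2 * (CC + 1)) powr (\<alpha> / bt) * (e / mu) powr (\<alpha> / bt)"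
      using CC_nonneg e mu unfolding dl_def X_def
      by (simp add: powr_powr powr_mult[symmetric] mult.assoc)
    have d2: "(e / mu) powr (real DIM('a) / bt) = (e / mu) * (e / mu) powr (\<alpha> / bt)"
    proof -
      have "real DIM('a) / bt = 1 + \<alpha> / bt" using bt_pos by (simp add: bt_def field_simps)
      thus ?thesis using e mu by (simp add: powr_add)
    qed
    show ?thesis unfolding d1 d2 by (simp add: field_simps)
  qed
  finally show ?thesis using Bs sub unfolding Ai_def by blast
qed


lemma pointwise_split:
  assumes V_sets: "sets V = sets (lborel::'a measure)" and m: "emeasure V UNIV = ennreal m" "0 \<le> m"
    and t: "0 < t" and R: "0 \<le> R" and rho: "0 < rho" and h: "h = t * R / rho" "h \<le> 1/2"
    and e: "0 < e" and eV: "emeasure V (- cball 0 R) \<le> ennreal e"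
    and x: "rho \<le> norm x" and lam: "0 < lam"
    and big: "ereal lam < \<bar>enn2ereal (frac_max \<alpha> \<Phi> (dilate_measure t V) x)
                 - ereal (Sup ((\<lambda>r. phi_scaled \<alpha> \<Phi> r x) ` {0<..})) * enn2ereal (emeasure V UNIV)\<bar>"
  shows "lam / 2 < CC * (((1 - h) powr (- bt) - (1 + h) powr (- bt)) * m + e) * norm x powr (- bt)
     \<or> ennreal (lam / 2) < (\<integral>\<^sup>+y. indicator (- cball 0 R) y * Kf (x - t *\<^sub>R y) \<partial>V)"
proof -
  define s where "s = norm x"
  have s: "0 < s" unfolding s_def using x rho by linarith
  have x0: "x \<noteq> 0" using s by (auto simp: s_def)
  define a where "a = CC * s powr (- bt)"
  have a0: "0 \<le> a" using CC_nonneg by (simp add: a_def)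
  have Sx: "Sup ((\<lambda>r. phi_scaled \<alpha> \<Phi> r x) ` {0<..}) = a" using sup_phi_x[OF x0] by (simp add: a_def s_def)
  define P where "P = (1 - h) powr (- bt)"
  define Q where "Q = (1 + h) powr (- bt)"
  have h0: "0 \<le> h" using t R rho h by simp
  have h1: "h < 1" using h(2) by linarith
  have tR: "t * R \<le> h * s"
  proof -
    have "t * R = h * rho" using h rho by simp
    also have "\<dots> \<le> h * s" using h0 x by (simp add: s_def mult_left_mono)
    finally show ?thesis .
  qed
  have P1: "1 \<le> P"
  proof -
    have "h < 1" using h(2) by linarith
    thus ?thesis unfolding P_def using h0 bt_pos powr_mono2'[of "- bt" "1 - h" 1] by simp
  qed
  have Q1: "Q \<le> 1" "0 \<le> Q" unfolding Q_def using h0 h bt_pos powr_mono2'[of "- bt" 1 "1 + h"] by simp_all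
  have "h * s \<le> 1/2 * s" using h(2) s by (intro mult_right_mono) auto
  hence d: "0 < s - t * R" using tR s by linarith
  have up1: "CC * (s - t * R) powr (- bt) \<le> a * P"
  proof -
    have "s * (1 - h) \<le> s - t * R" using tR by (simp add: algebra_simps)
    moreover have "0 < s * (1 - h)" using s h1 by simp
    ultimately have "(s - t * R) powr (- bt) \<le> (s * (1 - h)) powr (- bt)"
      using bt_pos by (intro powr_mono2') auto
    also have "\<dots> = s powr (- bt) * P" using s h1 by (simp add: P_def powr_mult)
    finally show ?thesis using CC_nonneg by (simp add: a_def mult.assoc mult_left_mono)
  qed
  have lo1: "a * Q \<le> CC * (s + t * R) powr (- bt)"
  proof -
    have "s + t * R \<le> s * (1 + h)" using tR by (simp add: algebra_simps)
    moreover have "0 < s + t * R" using s t R by (simp add: add_pos_nonneg)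
    ultimately have "(s * (1 + h)) powr (- bt) \<le> (s + t * R) powr (- bt)"
      using bt_pos by (intro powr_mono2') auto
    moreover have "(s * (1 + h)) powr (- bt) = s powr (- bt) * Q" using s h0 by (simp add: Q_def powr_mult)
    ultimately show ?thesis using CC_nonneg by (simp add: a_def mult.assoc mult_left_mono)
  qed
  define T where "T = (\<integral>\<^sup>+y. indicator (- cball 0 R) y * Kf (x - t *\<^sub>R y) \<partial>V)"
  define M where "M = frac_max \<alpha> \<Phi> (dilate_measure t V) x"
  have U: "M \<le> ennreal (a * P) * ennreal m + T"
  proof -
    have "M \<le> ennreal (CC * (s - t * R) powr (- bt)) * emeasure V UNIV + T"
      unfolding M_def T_def s_def using upper_bound[OF V_sets _ R] d t by (simp add: s_def)
    also have "\<dots> \<le> ennreal (a * P) * ennreal m + T"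
      unfolding m by (intro add_right_mono mult_right_mono ennreal_leI up1) auto
    finally show ?thesis .
  qed
  obtain ep where ep: "emeasure V (- cball 0 R) = ennreal ep" "0 \<le> ep" "ep \<le> e"
  proof -
    have "emeasure V (- cball 0 R) \<noteq> \<infinity>" using eV by (auto simp: top_unique)
    then obtain ep where "emeasure V (- cball 0 R) = ennreal ep" "0 \<le> ep" by (cases "emeasure V (- cball 0 R)") auto
    moreover have "ep \<le> e" using eV calculation e by (simp add: ennreal_le_iff)
    ultimately show ?thesis using that by blast
  qed
  have cbs: "cball 0 R \<in> sets V" "- cball 0 R \<in> sets V" using V_sets by auto
  have "emeasure V (cball 0 R) + emeasure V (- cball 0 R) = emeasure V (cball 0 R \<union> - cball 0 R)"
    using cbs by (intro plus_emeasure) auto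
  hence "emeasure V (cball 0 R) + ennreal ep = ennreal m" using m ep by simp
  hence vc: "emeasure V (cball 0 R) = ennreal (m - ep)" "ep \<le> m"
    using ep m by (cases "emeasure V (cball 0 R)"; auto simp: ennreal_plus[symmetric] simp del: ennreal_plus)+
  have L: "ennreal (a * Q) * ennreal (m - ep) \<le> M"
  proof -
    have "ennreal (a * Q) * ennreal (m - ep) \<le> ennreal (CC * (s + t * R) powr (- bt)) * emeasure V (cball 0 R)"
      unfolding vc by (intro mult_right_mono ennreal_leI lo1) auto
    also have "\<dots> \<le> M" unfolding M_def s_def using lower_bound[OF V_sets _ R x0] t by simp
    finally show ?thesis .
  qed
  have big': "ereal lam < \<bar>enn2ereal M - ereal a * ereal m\<bar>" using big m unfolding M_def Sx by simp
  show ?thesis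
  proof (cases "T = \<infinity>")
    case True then show ?thesis unfolding T_def by simp
  next
    case False
    then obtain T0 where T0: "T = ennreal T0" "0 \<le> T0" by (cases T) auto
    have Ueq: "ennreal (a * P) * ennreal m + T = ennreal (a * P * m + T0)"
      using a0 P1 m(2) T0 by (simp add: ennreal_mult ennreal_plus)
    have Mfin: "M \<noteq> \<infinity>" using U unfolding Ueq by (auto simp: top_unique)
    then obtain u where u: "M = ennreal u" "0 \<le> u" by (cases M) auto
    have uU: "u \<le> a * P * m + T0"
    proof -
      have "ennreal u \<le> ennreal (a * P * m + T0)" using U u unfolding Ueq by simp
      thus ?thesis using T0 a0 P1 m(2) by (subst (asm) ennreal_le_iff) auto
    qed
    have uL: "a * Q * (m - ep) \<le> u"
    proof -
      have "ennreal (a * Q * (m - ep)) \<le> ennreal u" using L u a0 Q1 vc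
        by (simp add: ennreal_mult[symmetric] mult.assoc)
      thus ?thesis using u by (simp add: ennreal_le_iff)
    qed
    have lamu: "lam < \<bar>u - a * m\<bar>" using big' u by simp
    have f1: "a * (P - 1) * m \<le> a * (P - Q) * m" using a0 m Q1
      by (intro mult_right_mono mult_left_mono) auto
    have f2: "a * (1 - Q) * m \<le> a * (P - Q) * m" using a0 m P1
      by (intro mult_right_mono mult_left_mono) auto
    have f3: "a * Q * ep \<le> a * e"
    proof -
      have "Q * ep \<le> 1 * e" using Q1 ep by (intro mult_mono) auto
      thus ?thesis using a0 by (simp add: mult.assoc mult_left_mono)
    qed
    have f4: "0 \<le> a * e" using a0 e by simp
    have eqs: "a * (P - 1) * m = a * P * m - a * m" "a * (1 - Q) * m = a * m - a * Q * m"
      "a * Q * (m - ep) = a * Q * m - a * Q * ep"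
      "a * ((P - Q) * m + e) = a * (P - Q) * m + a * e" by (simp_all add: algebra_simps)
    have "lam / 2 < a * ((P - Q) * m + e) \<or> lam / 2 < T0"
    proof (cases "a * m \<le> u")
      case True
      hence "lam < u - a * m" using lamu by simp
      also have "\<dots> \<le> a * (P - 1) * m + T0" using uU by (simp add: algebra_simps)
      also have "\<dots> \<le> a * ((P - Q) * m + e) + T0" using f1 f4 unfolding eqs(4) by simp
      finally have "lam < a * ((P - Q) * m + e) + T0" .
      thus ?thesis by (smt (verit) field_sum_of_halves)
    next
      case False
      hence "lam < a * m - u" using lamu by simp
      also have "\<dots> \<le> a * m - a * Q * (m - ep)" using uL by simp
      also have "\<dots> = a * (1 - Q) * m + a * Q * ep" by (simp add: algebra_simps)
      also have "\<dots> \<le> a * ((P - Q) * m + e)" using f2 f3 unfolding eqs(4) by simp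
      finally have "lam < a * ((P - Q) * m + e)" .
      thus ?thesis using T0 by (smt (verit) field_sum_of_halves)
    qed
    moreover have "a * ((P - Q) * m + e) = CC * (((1 - h) powr (- bt) - (1 + h) powr (- bt)) * m + e) * norm x powr (- bt)"
      by (simp add: a_def P_def Q_def s_def ac_simps)
    moreover have "lam / 2 < T0 \<Longrightarrow> ennreal (lam / 2) < ennreal T0"
      using lam by (intro ennreal_lessI) auto
    ultimately show ?thesis unfolding T_def[symmetric] using T0 by auto
  qed
qed


lemma theta_nonneg:
  assumes "0 \<le> h" "h < 1"
  shows "0 \<le> (1 - h) powr (- bt) - (1 + h) powr (- bt)"
proof -
  have "(1 + h) powr (- bt) \<le> 1 powr (- bt)" using assms bt_pos by (intro powr_mono2') auto
  moreover have "1 powr (- bt) \<le> (1 - h) powr (- bt)" using assms bt_pos by (intro powr_mono2') auto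
  ultimately show ?thesis by simp
qed

lemma weak_bound:
  assumes V_sets: "sets V = sets (lborel::'a measure)" and fin: "finite_measure V"
    and m: "emeasure V UNIV = ennreal m" "0 \<le> m"
    and t: "0 < t" and R: "0 \<le> R" and rho: "0 < rho" and h: "h = t * R / rho" "h \<le> 1/2"
    and e: "0 < e" and eV: "emeasure V (- cball 0 R) \<le> ennreal e"
  shows "weak_Lp_norm (real DIM('a) / bt) (- ball 0 rho)
            (\<lambda>x. \<bar>enn2ereal (frac_max \<alpha> \<Phi> (dilate_measure t V) x)
                 - ereal (Sup ((\<lambda>r. phi_scaled \<alpha> \<Phi> r x) ` {0<..})) * enn2ereal (emeasure V UNIV)\<bar>)
     \<le> ennreal (4 * (CC * (((1 - h) powr (- bt) - (1 + h) powr (- bt)) * m + e)) * unit_ball_vol (real DIM('a)) powr (1 / (real DIM('a) / bt))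
          + 4 * e * (2 * (CC * unit_ball_vol (real DIM('a)) * 2 powr bt / (1 - 2 powr (-\<alpha>))) * (2 * (CC + 1)) powr (\<alpha> / bt)) powr (1 / (real DIM('a) / bt)))"
    (is "weak_Lp_norm ?p _ ?f \<le> ennreal (4 * ?c * ?w powr ?q + 4 * e * ?D powr ?q)")
proof -
  define p where "p = ?p"
  define q where "q = 1 / p"
  define c where "c = ?c"
  define w where "w = ?w"
  define D where "D = 2 * (CC * w * 2 powr bt / (1 - 2 powr (-\<alpha>))) * (2 * (CC + 1)) powr (\<alpha> / bt)"
  have n0: "0 < real DIM('a)" by simp
  have p0: "0 < p" using bt_pos by (simp add: p_def)
  have q0: "0 < q" "q \<le> 1" using bt_pos alpha by (simp_all add: q_def p_def bt_def)
  have pq: "p * q = 1" using p0 by (simp add: q_def)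
  have h0: "0 \<le> h" using t R rho h by simp
  have h1: "h < 1" using h(2) by linarith
  have c0: "0 \<le> c" unfolding c_def using CC_nonneg theta_nonneg[OF h0 h1] m e by simp
  have w0: "0 \<le> w" by (simp add: w_def)
  have "(2::real) powr (- \<alpha>) < 2 powr 0" using alpha by (intro powr_less_mono) auto
  hence D0: "0 \<le> D" unfolding D_def w_def using CC_nonneg by simp
  show ?thesis
    unfolding weak_Lp_norm_def p_def[symmetric] q_def[symmetric] D_def[symmetric] c_def[symmetric] w_def[symmetric]
  proof (rule SUP_least)
    fix lam :: real assume "lam \<in> {0<..}"
    hence lam: "0 < lam" by simp
    obtain B where B: "B \<in> sets lborel"
      "{x. ennreal (lam / 2) < (\<integral>\<^sup>+y. indicator (- cball 0 R) y * Kf (x - t *\<^sub>R y) \<partial>V)} \<subseteq> B"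
      "emeasure lborel B \<le> ennreal (D * (e / (lam / 2)) powr p)"
      using weak_T[OF V_sets fin t e eV, of "lam / 2"] lam unfolding D_def p_def w_def by auto
    define r1 where "r1 = (2 * c / lam) powr (1 / bt)"
    define S where "S = {x \<in> - ball 0 rho. ereal lam < \<bar>?f x\<bar>}"
    have SB: "S \<subseteq> ball 0 r1 \<union> B"
    proof
      fix x assume xS: "x \<in> S"
      hence x: "rho \<le> norm x" and big: "ereal lam < ?f x" by (auto simp: S_def)
      from pointwise_split[OF V_sets m t R rho h e eV x lam big]
      have "lam / 2 < c * norm x powr (- bt) \<or> ennreal (lam / 2) < (\<integral>\<^sup>+y. indicator (- cball 0 R) y * Kf (x - t *\<^sub>R y) \<partial>V)"
        by (simp add: c_def)
      then show "x \<in> ball 0 r1 \<union> B"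
      proof
        assume A: "lam / 2 < c * norm x powr (- bt)"
        have "norm x < r1"
        proof (rule ccontr)
          assume "\<not> norm x < r1"
          hence nx: "r1 \<le> norm x" by simp
          have cpos: "0 < c" using A lam c0 by (cases "c = 0") auto
          have r1p: "0 < r1" using cpos lam by (simp add: r1_def)
          have "norm x powr (- bt) \<le> r1 powr (- bt)" using nx r1p bt_pos by (intro powr_mono2') auto
          also have "r1 powr (- bt) = lam / (2 * c)"
            using cpos lam bt_pos by (simp add: r1_def powr_powr powr_minus)
          finally have "c * norm x powr (- bt) \<le> c * (lam / (2 * c))" using c0 by (intro mult_left_mono)
          also have "\<dots> = lam / 2" using cpos by simp
          finally show False using A by simp
        qed
        thus ?thesis by simp
      next
        assume "ennreal (lam / 2) < (\<integral>\<^sup>+y. indicator (- cball 0 R) y * Kf (x - t *\<^sub>R y) \<partial>V)"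
        thus ?thesis using B(2) by auto
      qed
    qed
    define X where "X = w * (2 * c / lam) powr p"
    define Y where "Y = D * (2 * e / lam) powr p"
    have X0: "0 \<le> X" "0 \<le> Y" using w0 D0 by (simp_all add: X_def Y_def)
    have r1n: "r1 ^ DIM('a) = (2 * c / lam) powr p"
    proof (cases "c = 0")
      case True then show ?thesis by (simp add: r1_def)
    next
      case False
      hence "0 < r1" using c0 lam by (simp add: r1_def)
      hence "r1 ^ DIM('a) = r1 powr real DIM('a)" by (simp add: powr_realpow)
      also have "\<dots> = (2 * c / lam) powr p" unfolding r1_def p_def using bt_pos by (simp add: powr_powr)
      finally show ?thesis .
    qed
    have L: "leb_outer S \<le> ennreal (X + Y)"
    proof -
      have "leb_outer S \<le> emeasure lborel (ball 0 r1 \<union> B)"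
        using B(1) by (intro leb_outer_le SB) auto
      also have "\<dots> \<le> emeasure lborel (ball (0::'a) r1) + emeasure lborel B"
        by (rule emeasure_subadditive) (use B(1) in auto)
      also have "emeasure lborel (ball (0::'a) r1) = ennreal X"
        using c0 lam by (simp add: emeasure_ball r1_def X_def w_def r1n[symmetric])
      also have "e / (lam / 2) = 2 * e / lam" by simp
      hence "emeasure lborel B \<le> ennreal Y" using B(3) by (simp add: Y_def mult.commute)
      finally show ?thesis using X0 by (simp add: ennreal_plus add_left_mono)
    qed
    have Lfin: "leb_outer S \<noteq> \<infinity>" using L by (auto simp: top_unique)
    have "enn_powr (leb_outer S) q \<le> ennreal ((X + Y) powr q)"
    proof -
      have "enn2real (leb_outer S) \<le> X + Y" using L Lfin X0 by (simp add: enn2real_leI)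
      hence "enn2real (leb_outer S) powr q \<le> (X + Y) powr q" using q0 by (intro powr_mono2) auto
      thus ?thesis using Lfin by (simp add: enn_powr_def ennreal_leI)
    qed
    also have "(X + Y) powr q \<le> 2 * (X powr q + Y powr q)" using X0 q0 by (rule powr_sum_le)
    also have "X powr q = w powr q * (2 * c / lam)"
      using w0 c0 lam pq by (simp add: X_def powr_mult powr_powr)
    also have "Y powr q = D powr q * (2 * e / lam)"
      using D0 e lam pq by (simp add: Y_def powr_mult powr_powr)
    finally have P: "enn_powr (leb_outer S) q \<le> ennreal (2 * (w powr q * (2 * c / lam) + D powr q * (2 * e / lam)))"
      by (simp add: ennreal_leI)
    have "ennreal lam * enn_powr (leb_outer S) q \<le> ennreal lam * ennreal (2 * (w powr q * (2 * c / lam) + D powr q * (2 * e / lam)))"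
      by (intro mult_left_mono P) auto
    also have "\<dots> = ennreal (lam * (2 * (w powr q * (2 * c / lam) + D powr q * (2 * e / lam))))"
      using lam c0 e by (intro ennreal_mult[symmetric]) auto
    also have "lam * (2 * (w powr q * (2 * c / lam) + D powr q * (2 * e / lam))) = 4 * c * w powr q + 4 * e * D powr q"
      using lam by (simp add: field_simps)
    finally have fin: "ennreal lam * enn_powr (leb_outer S) q \<le> ennreal (4 * c * w powr q + 4 * e * D powr q)" .
    show "ennreal lam * enn_powr (leb_outer {x \<in> - ball 0 rho. ereal lam < \<bar>\<bar>enn2ereal (frac_max \<alpha> \<Phi> (dilate_measure t V) x)
                 - ereal (Sup ((\<lambda>r. phi_scaled \<alpha> \<Phi> r x) ` {0<..})) * enn2ereal (emeasure V UNIV)\<bar>\<bar>}) q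
        \<le> ennreal (4 * c * w powr q + 4 * e * D powr q)" using fin by (simp add: S_def)
  qed
qed

end

theorem corollary2p4:
  fixes \<alpha> :: real and \<Phi> :: "real \<Rightarrow> real" and e1 :: "'a::euclidean_space"
    and V :: "'a measure" and \<rho> :: real
  assumes alpha: "0 < \<alpha>" "\<alpha> < real DIM('a)"
    and Phi_nonneg: "\<And>s. 0 \<le> s \<Longrightarrow> 0 \<le> \<Phi> s"
    and Phi_decr: "\<And>s s'. 0 \<le> s \<Longrightarrow> s \<le> s' \<Longrightarrow> \<Phi> s' \<le> \<Phi> s"
    and e1: "e1 \<in> Basis"
    and sup_fin: "bdd_above ((\<lambda>r. phi_scaled \<alpha> \<Phi> r e1) ` {0<..})"
    and V_sets: "sets V = sets lborel"
    and V_fin: "finite_measure V"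
    and V_ac: "absolutely_continuous lborel V"
    and rho: "0 < \<rho>"
  shows "((\<lambda>t. weak_Lp_norm (real DIM('a) / (real DIM('a) - \<alpha>)) (- ball 0 \<rho>)
            (\<lambda>x. \<bar>enn2ereal (frac_max \<alpha> \<Phi> (dilate_measure t V) x)
                 - ereal (Sup ((\<lambda>r. phi_scaled \<alpha> \<Phi> r x) ` {0<..})) * enn2ereal (emeasure V UNIV)\<bar>))
          \<longlongrightarrow> 0) (at_right 0)"
  proof -
  define bt where "bt = real DIM('a) - \<alpha>"
  define CC where "CC = Sup ((\<lambda>r. phi_scaled \<alpha> \<Phi> r e1) ` {0<..})"
  interpret C: corset \<alpha> \<Phi> e1 bt CC
    by unfold_locales (use assms in \<open>auto simp: bt_def CC_def\<close>)
  interpret V: finite_measure V by (rule V_fin)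
  define m where "m = measure V UNIV"
  have m: "emeasure V UNIV = ennreal m" "0 \<le> m" by (simp_all add: m_def V.emeasure_eq_measure)
  define w where "w = unit_ball_vol (real DIM('a))"
  define q where "q = 1 / (real DIM('a) / bt)"
  define D where "D = 2 * (CC * w * 2 powr bt / (1 - 2 powr (-\<alpha>))) * (2 * (CC + 1)) powr (\<alpha> / bt)"
  have w0: "0 \<le> w" by (simp add: w_def)
  have "(2::real) powr (- \<alpha>) < 2 powr 0" using alpha by (intro powr_less_mono) auto
  hence D0: "0 \<le> D" unfolding D_def using C.CC_nonneg w0 by simp
  define W where "W t = weak_Lp_norm (real DIM('a) / (real DIM('a) - \<alpha>)) (- ball 0 \<rho>)
            (\<lambda>x. \<bar>enn2ereal (frac_max \<alpha> \<Phi> (dilate_measure t V) x)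
                 - ereal (Sup ((\<lambda>r. phi_scaled \<alpha> \<Phi> r x) ` {0<..})) * enn2ereal (emeasure V UNIV)\<bar>)" for t
  have main: "\<forall>\<^sub>F t in at_right 0. W t \<le> ennreal eta" if eta: "0 < eta" for eta
  proof -
    define K1 where "K1 = 4 * CC * w powr q + 4 * D powr q"
    have K10: "0 \<le> K1" using C.CC_nonneg w0 D0 by (simp add: K1_def)
    define e where "e = eta / (4 * (K1 + 1))"
    have e: "0 < e" using eta K10 by (simp add: e_def)
    have eK: "e * K1 \<le> eta / 4"
    proof -
      have "e * K1 \<le> e * (K1 + 1)" using e by simp
      also have "\<dots> = eta / 4"
      proof -
        have "K1 + 1 \<noteq> 0" "4 * K1 + 4 \<noteq> 0" using K10 by simp_all
        thus ?thesis unfolding e_def by (simp add: field_simps)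
      qed
      finally show ?thesis .
    qed
    obtain R where R: "0 \<le> R" "emeasure V (- cball 0 R) \<le> ennreal e"
      using obtain_R[OF V_sets V_fin e] by blast
    define g where "g t = 4 * (CC * (((1 - t * R / \<rho>) powr (- bt) - (1 + t * R / \<rho>) powr (- bt)) * m)) * w powr q" for t
    have "(g \<longlongrightarrow> g 0) (at_right 0)" unfolding g_def using rho by (intro tendsto_intros) auto
    moreover have "g 0 = 0" using rho by (simp add: g_def)
    ultimately have g0: "(g \<longlongrightarrow> 0) (at_right 0)" by simp
    have hl: "((\<lambda>t. t * R / \<rho>) \<longlongrightarrow> 0) (at_right 0)" using rho by (intro tendsto_eq_intros) auto
    have ev: "\<forall>\<^sub>F t in at_right 0. 0 < t \<and> t * R / \<rho> < 1/2 \<and> g t < eta / 2"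
      using eta by (intro eventually_conj eventually_at_right_less order_tendstoD(2)[OF hl] order_tendstoD(2)[OF g0]) auto
    show ?thesis
      using ev
    proof eventually_elim
      case (elim t)
      have "W t \<le> ennreal (4 * (CC * (((1 - t * R / \<rho>) powr (- bt) - (1 + t * R / \<rho>) powr (- bt)) * m + e)) * w powr q
          + 4 * e * D powr q)"
        unfolding W_def w_def q_def D_def bt_def[symmetric]
        using C.weak_bound[OF V_sets V_fin m _ R(1) rho refl _ e R(2), of t] elim by simp
      also have "\<dots> \<le> ennreal eta"
      proof (rule ennreal_leI)
        have "4 * (CC * (((1 - t * R / \<rho>) powr (- bt) - (1 + t * R / \<rho>) powr (- bt)) * m + e)) * w powr q + 4 * e * D powr q
           = g t + e * K1" by (simp add: g_def K1_def algebra_simps)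
        thus "4 * (CC * (((1 - t * R / \<rho>) powr (- bt) - (1 + t * R / \<rho>) powr (- bt)) * m + e)) * w powr q + 4 * e * D powr q \<le> eta"
          using elim eK eta by linarith
      qed
      finally show ?case .
    qed
  qed
  show ?thesis
    unfolding W_def[symmetric]
  proof (rule order_tendstoI)
    fix a :: ennreal assume "a < 0" thus "\<forall>\<^sub>F t in at_right 0. a < W t" by simp
  next
    fix a :: ennreal assume a: "0 < a"
    obtain eta where eta: "0 < eta" "ennreal eta < a"
    proof (cases a)
      case (real r)
      thus ?thesis using a that[of "r / 2"] by (auto simp: ennreal_lessI)
    next
      case top
      thus ?thesis using that[of 1] by simp
    qed
    show "\<forall>\<^sub>F t in at_right 0. W t < a"
      using main[OF eta(1)] by eventually_elim (use eta(2) in auto)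
  qed
qed

end
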